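(* Let $\mathfrak R$ be an iterated graph system satisfying (GR1)–(GR3), with replacement graphs $G_k$. Let $\theta=[w^{(1)},\dots,w^{(l)}]$ be a path in $G_n$ and fix $v^{(1)}\in W_m$. Then there is at most one path $\hat\theta$ in $G_{n+m}$ of the form $\hat\theta=[w^{(1)}v^{(1)},\dots,w^{(l)}v^{(l)}]$ with $v^{(2)},\dots,v^{(l)}\in W_m$.
   Context: Graphs: $(V,E)$, $V$ finite non-empty, $E\subseteq V\times V$, $(x,y)\in E\Rightarrow(y,x)\notin E$; $\{x,y\}\in E$ means either orientation. A path is a sequence $[x_1,\dots,x_k]$ with $\{x_i,x_{i+1}\}\in E$. An iterated graph system consists of a connected graph $G_1=(S,E)$, a finite set $\mathcal T$ of types, a surjective typing $\mathfrak t:E\to\mathcal T$ and non-empty gluing rules $I_t\subseteq S\times S$. With $W_m=S^m$, $[w]_k=w_1\cdots w_k$ and $wv$ the concatenation of words, the replacement graphs $G_m=(W_m,E_m)$ are defined recursively: $(w,v)\in E_{m+1}$ iff either (1) $[w]_m=[v]_m$ and $(w_{m+1},v_{m+1})\in E$ (type $\mathfrak t(w_{m+1},v_{m+1})$), or (2) $([w]_m,[v]_m)\in E_m$ and $(w_{m+1},v_{m+1})\in I_{\mathfrak t([w]_m,[v]_m)}$ (type $\mathfrak t([w]_m,[v]_m)$). (GR1): for each $t$ and $w\in S$ there is at most one $v$ with $(w,v)\in I_t$ and at most one $v$ with $(v,w)\in I_t$. (GR2): for each $t$ and $w\in S$, $w$ cannot both have some $v$ with $(w,v)\in I_t$ and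 an outgoing edge of $G_1$ of type $t$, nor both have some $v$ with $(v,w)\in I_t$ and an incoming edge of $G_1$ of type $t$. (GR3): the sets of first and second coordinates of $I_t$ are disjoint for each $t$. *)

theory Defs
  imports Main
begin

definition is_graph :: "'a set \<Rightarrow> ('a \<times> 'a) set \<Rightarrow> bool" where
  "is_graph V E \<longleftrightarrow> finite V \<and> V \<noteq> {} \<and> E \<subseteq> V \<times> V \<and>
     (\<forall>x y. (x, y) \<in> E \<longrightarrow> (y, x) \<notin> E)"

definition is_path :: "'a set \<Rightarrow> ('a \<times> 'a) set \<Rightarrow> 'a list \<Rightarrow> bool" where
  "is_path V E xs \<longleftrightarrow> xs \<noteq> [] \<and> set xs \<subseteq> V \<and>
     (\<forall>i. Suc i < length xs \<longrightarrow> (xs ! i, xs ! Suc i) \<in> E \<or> (xs ! Suc i, xs ! i) \<in> E)"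

definition graph_connected :: "'a set \<Rightarrow> ('a \<times> 'a) set \<Rightarrow> bool" where
  "graph_connected V E \<longleftrightarrow> (\<forall>x\<in>V. \<forall>y\<in>V. \<exists>xs. is_path V E xs \<and> hd xs = x \<and> last xs = y)"

text \<open>Iterated graph system: G_1 = (S,E), types T, typing tf (surjective E -> T), gluing rules I.\<close>
definition IGS :: "'a set \<Rightarrow> ('a \<times> 'a) set \<Rightarrow> 't set \<Rightarrow> ('a \<times> 'a \<Rightarrow> 't) \<Rightarrow> ('t \<Rightarrow> ('a \<times> 'a) set) \<Rightarrow> bool" where
  "IGS S E T tf I \<longleftrightarrow> is_graph S E \<and> graph_connected S E \<and> finite T \<and> tf ` E = T \<and>
     (\<forall>t\<in>T. I t \<noteq> {} \<and> I t \<subseteq> S \<times> S)"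

definition GR1 :: "'a set \<Rightarrow> 't set \<Rightarrow> ('t \<Rightarrow> ('a \<times> 'a) set) \<Rightarrow> bool" where
  "GR1 S T I \<longleftrightarrow> (\<forall>t\<in>T. \<forall>w\<in>S.
     (\<forall>v v'. (w, v) \<in> I t \<longrightarrow> (w, v') \<in> I t \<longrightarrow> v = v') \<and>
     (\<forall>v v'. (v, w) \<in> I t \<longrightarrow> (v', w) \<in> I t \<longrightarrow> v = v'))"

definition GR2 :: "'a set \<Rightarrow> ('a \<times> 'a) set \<Rightarrow> 't set \<Rightarrow> ('a \<times> 'a \<Rightarrow> 't) \<Rightarrow> ('t \<Rightarrow> ('a \<times> 'a) set) \<Rightarrow> bool" where
  "GR2 S E T tf I \<longleftrightarrow> (\<forall>t\<in>T. \<forall>w\<in>S.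
     \<not> ((\<exists>v. (w, v) \<in> I t) \<and> (\<exists>u. (w, u) \<in> E \<and> tf (w, u) = t)) \<and>
     \<not> ((\<exists>v. (v, w) \<in> I t) \<and> (\<exists>u. (u, w) \<in> E \<and> tf (u, w) = t)))"

definition GR3 :: "'t set \<Rightarrow> ('t \<Rightarrow> ('a \<times> 'a) set) \<Rightarrow> bool" where
  "GR3 T I \<longleftrightarrow> (\<forall>t\<in>T. fst ` I t \<inter> snd ` I t = {})"

text \<open>Words of length m over S (W_m = S^m); words are lists, [w]_k = take k w, concatenation = @.\<close>
definition words :: "'a set \<Rightarrow> nat \<Rightarrow> 'a list set" where
  "words S m = {w. length w = m \<and> set w \<subseteq> S}"

text \<open>Type of an edge of G_m (meaningful on edges only). Letter w_{m+1} is w ! m.\<close>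
fun edge_type :: "('a \<times> 'a \<Rightarrow> 't) \<Rightarrow> nat \<Rightarrow> 'a list \<times> 'a list \<Rightarrow> 't" where
  "edge_type tf 0 p = undefined"
| "edge_type tf (Suc m) (w, v) =
     (if take m w = take m v then tf (w ! m, v ! m)
      else edge_type tf m (take m w, take m v))"

text \<open>Edge sets E_m of the replacement graphs; E_0 = {} (on W_0 = {[]}) so that E_1 = E.\<close>
fun rep_edges :: "'a set \<Rightarrow> ('a \<times> 'a) set \<Rightarrow> ('a \<times> 'a \<Rightarrow> 't) \<Rightarrow> ('t \<Rightarrow> ('a \<times> 'a) set) \<Rightarrow> nat
    \<Rightarrow> ('a list \<times> 'a list) set" where
  "rep_edges S E tf I 0 = {}"
| "rep_edges S E tf I (Suc m) =
     {(w, v). w \<in> words S (Suc m) \<and> v \<in> words S (Suc m) \<and>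
       ((take m w = take m v \<and> (w ! m, v ! m) \<in> E) \<or>
        ((take m w, take m v) \<in> rep_edges S E tf I m \<and>
         (w ! m, v ! m) \<in> I (edge_type tf m (take m w, take m v))))}"

end

theory Submission
  imports Defs
begin

lemma rep_len:
  assumes "(w, v) \<in> rep_edges S E tf I k"
  shows "length w = k \<and> length v = k \<and> w \<in> words S k \<and> v \<in> words S k"
  using assms by (cases k) (auto simp: words_def)

lemma rep_antisym:
  assumes "is_graph S E"
  shows "(x, y) \<in> rep_edges S E tf I k \<Longrightarrow> (y, x) \<notin> rep_edges S E tf I k"
proof (induction k arbitrary: x y)
  case 0 then show ?case by simp
next
  case (Suc k)
  have g: "(a, b) \<in> E \<Longrightarrow> (b, a) \<notin> E" for a b using assms unfolding is_graph_def by blast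
  show ?case
  proof
    assume h: "(y, x) \<in> rep_edges S E tf I (Suc k)"
    show False
    proof (cases "take k x = take k y")
      case True
      then show False using Suc.prems h g Suc.IH by auto
    next
      case False
      then show False using Suc.prems h Suc.IH by auto
    qed
  qed
qed

lemma rep_noloop:
  assumes "is_graph S E"
  shows "(x, x) \<notin> rep_edges S E tf I k"
  using rep_antisym[OF assms] by blast

lemma type_in:
  assumes "is_graph S E" "tf ` E = T"
  shows "(x, y) \<in> rep_edges S E tf I k \<Longrightarrow> edge_type tf k (x, y) \<in> T"
proof (induction k arbitrary: x y)
  case 0 then show ?case by simp
next
  case (Suc k)
  show ?case
  proof (cases "take k x = take k y")
    case True
    then have "(x ! k, y ! k) \<in> E"
      using Suc.prems rep_noloop[OF assms(1), of "take k y" tf I k] by auto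
    then show ?thesis using True assms(2) by auto
  next
    case False
    then show ?thesis using Suc.prems Suc.IH by auto
  qed
qed

lemma key:
  assumes G: "is_graph S E" and TT: "tf ` E = T" and R1: "GR1 S T I"
  shows "n \<le> k \<Longrightarrow> take n u1 = take n u2 \<Longrightarrow> take n u1 \<noteq> take n u \<Longrightarrow>
    (u, u1) \<in> rep_edges S E tf I k \<or> (u1, u) \<in> rep_edges S E tf I k \<Longrightarrow>
    (u, u2) \<in> rep_edges S E tf I k \<or> (u2, u) \<in> rep_edges S E tf I k \<Longrightarrow> u1 = u2"
proof (induction k arbitrary: u u1 u2)
  case 0 then show ?case by simp
next
  case (Suc k)
  have L: "length u = Suc k" "length u1 = Suc k" "length u2 = Suc k"
    "u \<in> words S (Suc k)"
    using Suc.prems(4,5) rep_len by metis+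
  show ?case
  proof (cases "n = Suc k")
    case True
    then show ?thesis using L Suc.prems(2) by (metis take_all order_refl)
  next
    case False
    then have nk: "n \<le> k" using Suc.prems(1) by simp
    have tk: "take n (take k z) = take n z" for z :: "'a list" using nk by (simp add: min_def)
    have d1: "take k u1 \<noteq> take k u" using Suc.prems(3) tk by metis
    have d2: "take k u2 \<noteq> take k u" using Suc.prems(2,3) tk by metis
    define t1 where "t1 = (\<lambda>a b. edge_type tf k (take k a, take k b))"
    have E1: "(take k u, take k u1) \<in> rep_edges S E tf I k \<and> (u!k, u1!k) \<in> I (t1 u u1) \<or>
              (take k u1, take k u) \<in> rep_edges S E tf I k \<and> (u1!k, u!k) \<in> I (t1 u1 u)"
      using Suc.prems(4) d1 unfolding t1_def by auto
    have E2: "(take k u, take k u2) \<in> rep_edges S E tf I k \<and> (u!k, u2!k) \<in> I (t1 u u2) \<or>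
              (take k u2, take k u) \<in> rep_edges S E tf I k \<and> (u2!k, u!k) \<in> I (t1 u2 u)"
      using Suc.prems(5) d2 unfolding t1_def by auto
    have tke: "take k u1 = take k u2"
      using Suc.IH[OF nk, of "take k u1" "take k u2" "take k u"] E1 E2 tk Suc.prems(2,3) by metis
    have uS: "u ! k \<in> S" using L(4) unfolding words_def by auto
    have lastk: "u1 ! k = u2 ! k"
      using E1 E2
    proof (elim disjE conjE)
      assume a: "(take k u, take k u1) \<in> rep_edges S E tf I k" "(u ! k, u1 ! k) \<in> I (t1 u u1)"
        "(take k u, take k u2) \<in> rep_edges S E tf I k" "(u ! k, u2 ! k) \<in> I (t1 u u2)"
      have "t1 u u1 \<in> T" using type_in[OF G TT a(1)] t1_def by simp
      moreover have "t1 u u2 = t1 u u1" using tke t1_def by simp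
      ultimately show ?thesis using R1 a uS unfolding GR1_def by metis
    next
      assume a: "(take k u, take k u1) \<in> rep_edges S E tf I k"
        "(take k u2, take k u) \<in> rep_edges S E tf I k"
      then show ?thesis using rep_antisym[OF G] tke by metis
    next
      assume a: "(take k u1, take k u) \<in> rep_edges S E tf I k"
        "(take k u, take k u2) \<in> rep_edges S E tf I k"
      then show ?thesis using rep_antisym[OF G] tke by metis
    next
      assume a: "(take k u1, take k u) \<in> rep_edges S E tf I k" "(u1 ! k, u ! k) \<in> I (t1 u1 u)"
        "(take k u2, take k u) \<in> rep_edges S E tf I k" "(u2 ! k, u ! k) \<in> I (t1 u2 u)"
      have "t1 u1 u \<in> T" using type_in[OF G TT a(1)] t1_def by simp
      moreover have "t1 u2 u = t1 u1 u" using tke t1_def by simp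
      ultimately show ?thesis using R1 a uS unfolding GR1_def by metis
    qed
    have "u1 = take k u1 @ [u1 ! k]" using L(2) take_Suc_conv_app_nth[of k u1] by simp
    moreover have "u2 = take k u2 @ [u2 ! k]" using L(3) take_Suc_conv_app_nth[of k u2] by simp
    ultimately show ?thesis using tke lastk by metis
  qed
qed

theorem proposition5p4:
  fixes S :: "'a set" and E :: "('a \<times> 'a) set" and T :: "'t set"
    and tf :: "'a \<times> 'a \<Rightarrow> 't" and I :: "'t \<Rightarrow> ('a \<times> 'a) set"
    and n m :: nat and \<theta> \<theta>1 \<theta>2 :: "'a list list" and v1 :: "'a list"
  assumes "IGS S E T tf I" and "GR1 S T I" and "GR2 S E T tf I" and "GR3 T I"
    and "n \<ge> 1" and "m \<ge> 1"
    and "is_path (words S n) (rep_edges S E tf I n) \<theta>"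
    and "v1 \<in> words S m"
    and "is_path (words S (n + m)) (rep_edges S E tf I (n + m)) \<theta>1"
    and "length \<theta>1 = length \<theta>" and "\<forall>i < length \<theta>. take n (\<theta>1 ! i) = \<theta> ! i"
    and "drop n (\<theta>1 ! 0) = v1"
    and "is_path (words S (n + m)) (rep_edges S E tf I (n + m)) \<theta>2"
    and "length \<theta>2 = length \<theta>" and "\<forall>i < length \<theta>. take n (\<theta>2 ! i) = \<theta> ! i"
    and "drop n (\<theta>2 ! 0) = v1"
  shows "\<theta>1 = \<theta>2"
proof -
  have G: "is_graph S E" and TT: "tf ` E = T" using assms(1) unfolding IGS_def by auto
  have ne: "\<theta> \<noteq> []" using assms(7) unfolding is_path_def by simp
  have P: "\<And>i. i < length \<theta> \<Longrightarrow> \<theta>1 ! i = \<theta>2 ! i"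
  proof -
    fix i show "i < length \<theta> \<Longrightarrow> \<theta>1 ! i = \<theta>2 ! i"
    proof (induction i)
      case 0
      then show ?case using assms(11,12,15,16) by (metis append_take_drop_id)
    next
      case (Suc i)
      have a: "(\<theta> ! i, \<theta> ! Suc i) \<in> rep_edges S E tf I n \<or> (\<theta> ! Suc i, \<theta> ! i) \<in> rep_edges S E tf I n"
        using assms(7) Suc.prems unfolding is_path_def by blast
      have neq: "\<theta> ! Suc i \<noteq> \<theta> ! i" using a rep_noloop[OF G] by metis
      have e1: "(\<theta>1 ! i, \<theta>1 ! Suc i) \<in> rep_edges S E tf I (n+m) \<or> (\<theta>1 ! Suc i, \<theta>1 ! i) \<in> rep_edges S E tf I (n+m)"
        using assms(9,10) Suc.prems unfolding is_path_def by simp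
      have e2: "(\<theta>2 ! i, \<theta>2 ! Suc i) \<in> rep_edges S E tf I (n+m) \<or> (\<theta>2 ! Suc i, \<theta>2 ! i) \<in> rep_edges S E tf I (n+m)"
        using assms(13,14) Suc.prems unfolding is_path_def by simp
      have IH: "\<theta>1 ! i = \<theta>2 ! i" using Suc by simp
      show ?case
        using key[OF G TT assms(2), of n "n+m" "\<theta>1 ! Suc i" "\<theta>2 ! Suc i" "\<theta>1 ! i"]
          e1 e2 IH neq assms(11,15) Suc.prems
        by (metis Suc_lessD le_add1)
    qed
  qed
  show ?thesis using P assms(10,14) by (metis nth_equalityI)
qed

end
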